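(* Assume the Nested Logit model with outside option described in the context satisfies Assumptions 1 and 2, and let $S \in \mathcal{S}$. Then for every $i \in S$: (I) if $N(i) \subseteq S$, then $\mathsf{BF}(i,S) = \mathsf{BF}(0,S)$; (II) if $N(i) \not\subseteq S$, then $\mathsf{BF}(i,S) > \mathsf{BF}(0,S)$, and moreover for every $j \in S \setminus \{i\}$ we have $N(i) = N(j)$ if and only if $\mathsf{BF}(i,S) = \mathsf{BF}(j,S)$. Consequently: (a) if $i \in S$ and $\mathsf{BF}(i,S) = \mathsf{BF}(0,S)$, then $N(i) \neq N(k)$ for all $k \notin S$; (b) if $i,j \in S$ and $\mathsf{BF}(i,S) = \mathsf{BF}(j,S) > \mathsf{BF}(0,S)$, then $N(i) = N(j)$; (c) if $i,j \in S$ and $\mathsf{BF}(i,S) \neq \mathsf{BF}(j,S)$, then $N(i) \neq N(j)$.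
   Context: Items: $[n]=\{1,\dots,n\}$ with $n\ge 2$. Experiment design: fix an integer base $b \ge 2$, let $L = \lceil \log_b n \rceil$, and fix an injective map $\sigma: [n] \to \{0,\dots,b-1\}^L$, writing $\sigma_\ell(i)$ for its $\ell$-th coordinate. For $\ell \in \{1,\dots,L\}$ and $d \in \{0,\dots,b-1\}$ let $S_{\ell,-d} = \{i \in [n] : \sigma_\ell(i) \neq d\}$, and let $\mathcal{S} = \{S_{\ell,-d}\}_{\ell,d}$ (the experimental assortments); the control assortment $[n]$ is also offered. Nested Logit model with outside option: $\mathcal{N}$ is a partition of $[n]$ into nonempty disjoint nests; $N(i)$ denotes the nest containing $i$. Each item has a weight $v_i > 0$, each nest $N$ a parameter $\lambda_N \in [0,1]$, and each nest with $\lambda_N = 0$ an additional weight $v_N > 0$. For $S \subseteq [n]$ set $v_N(S) = (\sum_{i \in N \cap S} v_i)^{\lambda_N}$ if $\lambda_N \in (0,1]$ and $v_N(S) = v_N \mathbf{1}(N \cap S \neq \emptyset)$ if $\lambda_N = 0$. For $i \in S$, $\phi(i,S) = \frac{v_{N(i)}(S)}{1 + \sum_{N \in \mathcal{N}} v_N(S)} \cdot \frac{v_i}{\sum_{j \in N(i) \cap S} v_j}$, and the outside option $0$ has $\phi(0,S) = \frac{1}{1 + \sum_{N \in \mathcal{N}} v_N(S)}$. Boost factor: for $S \in \mathcal{S}$ and $i \in S \cup \{0\}$, $\mathsf{BF}(i,S) = \phi(i,S)/\phi(i,[n])$. Multiplier: $\mathsf{Mult}(N,S) = \left(\frac{\sum_{j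 \in N} v_j}{\sum_{j \in N \cap S} v_j}\right)^{1-\lambda_N}$. Assumption 1: $\lambda_N = 1$ if and only if $|N| = 1$. Assumption 2: for every $S \in \mathcal{S}$ and every two distinct nests $N \neq N'$ with $\emptyset \neq N \cap S \neq N$ and $\emptyset \neq N' \cap S \neq N'$, we have $\mathsf{Mult}(N,S) \neq \mathsf{Mult}(N',S)$. *)

theory Defs
  imports Complex_Main
begin

definition items :: "nat \<Rightarrow> nat set" where
  "items n = {1..n}"

text \<open>Experiment design: base b, L = ceiling of log_b n, sigma i l is the l-th digit of item i.\<close>

definition design_L :: "nat \<Rightarrow> nat \<Rightarrow> nat" where
  "design_L n b = nat \<lceil>log (real b) (real n)\<rceil>"

definition valid_design :: "nat \<Rightarrow> nat \<Rightarrow> (nat \<Rightarrow> nat \<Rightarrow> nat) \<Rightarrow> bool" where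
  "valid_design n b \<sigma> \<longleftrightarrow> b \<ge> 2
     \<and> (\<forall>i\<in>items n. \<forall>l\<in>{1..design_L n b}. \<sigma> i l < b)
     \<and> (\<forall>i\<in>items n. \<forall>j\<in>items n.
           (\<forall>l\<in>{1..design_L n b}. \<sigma> i l = \<sigma> j l) \<longrightarrow> i = j)"

definition S_minus :: "nat \<Rightarrow> (nat \<Rightarrow> nat \<Rightarrow> nat) \<Rightarrow> nat \<Rightarrow> nat \<Rightarrow> nat set" where
  "S_minus n \<sigma> l d = {i \<in> items n. \<sigma> i l \<noteq> d}"

definition exp_assortments :: "nat \<Rightarrow> nat \<Rightarrow> (nat \<Rightarrow> nat \<Rightarrow> nat) \<Rightarrow> nat set set" where
  "exp_assortments n b \<sigma> =
     {S_minus n \<sigma> l d | l d. l \<in> {1..design_L n b} \<and> d < b}"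

definition is_partition :: "nat \<Rightarrow> nat set set \<Rightarrow> bool" where
  "is_partition n \<N> \<longleftrightarrow> \<Union>\<N> = items n \<and> {} \<notin> \<N>
     \<and> (\<forall>A\<in>\<N>. \<forall>B\<in>\<N>. A \<noteq> B \<longrightarrow> A \<inter> B = {})"

definition nest_of :: "nat set set \<Rightarrow> nat \<Rightarrow> nat set" where
  "nest_of \<N> i = (THE N. N \<in> \<N> \<and> i \<in> N)"

definition NL_model :: "nat \<Rightarrow> nat set set \<Rightarrow> (nat \<Rightarrow> real) \<Rightarrow> (nat set \<Rightarrow> real)
    \<Rightarrow> (nat set \<Rightarrow> real) \<Rightarrow> bool" where
  "NL_model n \<N> v lam vN \<longleftrightarrow> is_partition n \<N>
     \<and> (\<forall>i\<in>items n. v i > 0)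
     \<and> (\<forall>N\<in>\<N>. 0 \<le> lam N \<and> lam N \<le> 1)
     \<and> (\<forall>N\<in>\<N>. lam N = 0 \<longrightarrow> vN N > 0)"

definition nest_weight :: "(nat \<Rightarrow> real) \<Rightarrow> (nat set \<Rightarrow> real) \<Rightarrow> (nat set \<Rightarrow> real)
    \<Rightarrow> nat set \<Rightarrow> nat set \<Rightarrow> real" where
  "nest_weight v lam vN N S =
     (if lam N = 0 then (if N \<inter> S \<noteq> {} then vN N else 0)
      else (\<Sum>j\<in>N \<inter> S. v j) powr (lam N))"

definition NL_denom :: "nat set set \<Rightarrow> (nat \<Rightarrow> real) \<Rightarrow> (nat set \<Rightarrow> real) \<Rightarrow> (nat set \<Rightarrow> real)
    \<Rightarrow> nat set \<Rightarrow> real" where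
  "NL_denom \<N> v lam vN S = 1 + (\<Sum>N\<in>\<N>. nest_weight v lam vN N S)"

definition phi :: "nat set set \<Rightarrow> (nat \<Rightarrow> real) \<Rightarrow> (nat set \<Rightarrow> real) \<Rightarrow> (nat set \<Rightarrow> real)
    \<Rightarrow> nat \<Rightarrow> nat set \<Rightarrow> real" where
  "phi \<N> v lam vN i S =
     nest_weight v lam vN (nest_of \<N> i) S / NL_denom \<N> v lam vN S
       * (v i / (\<Sum>j\<in>nest_of \<N> i \<inter> S. v j))"

definition phi0 :: "nat set set \<Rightarrow> (nat \<Rightarrow> real) \<Rightarrow> (nat set \<Rightarrow> real) \<Rightarrow> (nat set \<Rightarrow> real)
    \<Rightarrow> nat set \<Rightarrow> real" where
  "phi0 \<N> v lam vN S = 1 / NL_denom \<N> v lam vN S"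

definition BF :: "nat \<Rightarrow> nat set set \<Rightarrow> (nat \<Rightarrow> real) \<Rightarrow> (nat set \<Rightarrow> real) \<Rightarrow> (nat set \<Rightarrow> real)
    \<Rightarrow> nat \<Rightarrow> nat set \<Rightarrow> real" where
  "BF n \<N> v lam vN i S = phi \<N> v lam vN i S / phi \<N> v lam vN i (items n)"

definition BF0 :: "nat \<Rightarrow> nat set set \<Rightarrow> (nat \<Rightarrow> real) \<Rightarrow> (nat set \<Rightarrow> real) \<Rightarrow> (nat set \<Rightarrow> real)
    \<Rightarrow> nat set \<Rightarrow> real" where
  "BF0 n \<N> v lam vN S = phi0 \<N> v lam vN S / phi0 \<N> v lam vN (items n)"

definition Mult :: "(nat \<Rightarrow> real) \<Rightarrow> (nat set \<Rightarrow> real) \<Rightarrow> nat set \<Rightarrow> nat set \<Rightarrow> real" where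
  "Mult v lam N S = ((\<Sum>j\<in>N. v j) / (\<Sum>j\<in>N \<inter> S. v j)) powr (1 - lam N)"

definition assumption1 :: "nat set set \<Rightarrow> (nat set \<Rightarrow> real) \<Rightarrow> bool" where
  "assumption1 \<N> lam \<longleftrightarrow> (\<forall>N\<in>\<N>. lam N = 1 \<longleftrightarrow> card N = 1)"

definition assumption2 :: "nat \<Rightarrow> nat \<Rightarrow> (nat \<Rightarrow> nat \<Rightarrow> nat) \<Rightarrow> nat set set \<Rightarrow> (nat \<Rightarrow> real)
    \<Rightarrow> (nat set \<Rightarrow> real) \<Rightarrow> bool" where
  "assumption2 n b \<sigma> \<N> v lam \<longleftrightarrow>
     (\<forall>S\<in>exp_assortments n b \<sigma>. \<forall>N\<in>\<N>. \<forall>N'\<in>\<N>.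
        N \<noteq> N' \<and> N \<inter> S \<noteq> {} \<and> N \<inter> S \<noteq> N \<and> N' \<inter> S \<noteq> {} \<and> N' \<inter> S \<noteq> N'
        \<longrightarrow> Mult v lam N S \<noteq> Mult v lam N' S)"

end

theory Submission
  imports Defs
begin

lemma nest_of_props:
  assumes "is_partition n \<N>" "i \<in> items n"
  shows "nest_of \<N> i \<in> \<N>" "i \<in> nest_of \<N> i"
proof -
  have U: "\<Union>\<N> = items n" and D: "\<forall>A\<in>\<N>. \<forall>B\<in>\<N>. A \<noteq> B \<longrightarrow> A \<inter> B = {}"
    using assms(1) unfolding is_partition_def by simp_all
  obtain N where N: "N \<in> \<N>" "i \<in> N" using U assms(2) by blast
  have u: "M = N" if "M \<in> \<N> \<and> i \<in> M" for M
  proof (rule ccontr)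
    assume "M \<noteq> N"
    then have "M \<inter> N = {}" using D that N by blast
    then show False using that N by blast
  qed
  have "nest_of \<N> i = N" unfolding nest_of_def
    using N u by (intro the_equality) blast+
  then show "nest_of \<N> i \<in> \<N>" "i \<in> nest_of \<N> i" using N by simp_all
qed

lemma denom_pos:
  assumes "NL_model n \<N> v lam vN"
  shows "NL_denom \<N> v lam vN S > 0"
proof -
  have "\<forall>N\<in>\<N>. nest_weight v lam vN N S \<ge> 0"
    using assms unfolding NL_model_def nest_weight_def by (auto intro: less_imp_le)
  hence "(\<Sum>N\<in>\<N>. nest_weight v lam vN N S) \<ge> 0" by (simp add: sum_nonneg)
  thus ?thesis unfolding NL_denom_def by linarith
qed

lemma BF_eq:
  assumes M: "NL_model n \<N> v lam vN" and S: "S \<subseteq> items n" and iS: "i \<in> S"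
  shows "BF n \<N> v lam vN i S = Mult v lam (nest_of \<N> i) S * BF0 n \<N> v lam vN S"
proof -
  define N where "N = nest_of \<N> i"
  have P: "is_partition n \<N>" using M unfolding NL_model_def by simp
  have ii: "i \<in> items n" using S iS by auto
  have NN: "N \<in> \<N>" "i \<in> N" using nest_of_props[OF P ii] N_def by auto
  have Nsub: "N \<subseteq> items n" using P NN unfolding is_partition_def by auto
  have fin: "finite N" using Nsub unfolding items_def by (auto intro: finite_subset)
  have vpos: "\<And>j. j \<in> N \<Longrightarrow> v j > 0" using M Nsub unfolding NL_model_def by auto
  define A where "A = (\<Sum>j\<in>N \<inter> S. v j)"
  define V where "V = (\<Sum>j\<in>N. v j)"
  have Apos: "A > 0" unfolding A_def using fin NN iS vpos
    by (intro sum_pos) auto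
  have Vpos: "V > 0" unfolding V_def using fin NN vpos by (intro sum_pos) auto
  have NI: "N \<inter> items n = N" using Nsub by auto
  have vi: "v i > 0" using vpos NN by auto
  define D1 where "D1 = NL_denom \<N> v lam vN S"
  define D2 where "D2 = NL_denom \<N> v lam vN (items n)"
  have D1: "D1 > 0" "D2 > 0" unfolding D1_def D2_def using denom_pos[OF M] by auto
  have lam: "0 \<le> lam N" "lam N \<le> 1" using M NN unfolding NL_model_def by auto
  have BF0: "BF0 n \<N> v lam vN S = D2 / D1" unfolding BF0_def phi0_def D1_def D2_def
    using D1 by (simp add: D1_def D2_def)
  show ?thesis
  proof (cases "lam N = 0")
    case True
    have vN: "vN N > 0" using M NN True unfolding NL_model_def by auto
    have "BF n \<N> v lam vN i S = (vN N / D1 * (v i / A)) / (vN N / D2 * (v i / V))"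
      unfolding BF_def phi_def nest_weight_def N_def[symmetric] A_def V_def D1_def D2_def
      using True NN iS NI by auto
    also have "\<dots> = (V / A) * (D2 / D1)" using vN D1 vi Apos Vpos by (simp add: field_simps)
    finally show ?thesis unfolding BF0 Mult_def N_def[symmetric] A_def[symmetric] V_def[symmetric]
      using True Apos Vpos by simp
  next
    case False
    have "BF n \<N> v lam vN i S = (A powr lam N / D1 * (v i / A)) / (V powr lam N / D2 * (v i / V))"
      unfolding BF_def phi_def nest_weight_def N_def[symmetric] A_def V_def D1_def D2_def
      using False NN iS NI by auto
    also have "\<dots> = ((V / A) / ((V / A) powr lam N)) * (D2 / D1)"
      using D1 vi Apos Vpos by (simp add: field_simps powr_divide)
    also have "(V / A) / ((V / A) powr lam N) = (V / A) powr (1 - lam N)"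
      using Apos Vpos by (simp add: powr_diff)
    finally show ?thesis unfolding BF0 Mult_def N_def[symmetric] A_def[symmetric] V_def[symmetric]
      by simp
  qed
qed

theorem proposition4p4:
  fixes n b :: nat and \<sigma> :: "nat \<Rightarrow> nat \<Rightarrow> nat" and \<N> :: "nat set set"
    and v :: "nat \<Rightarrow> real" and lam vN :: "nat set \<Rightarrow> real" and S :: "nat set"
  assumes "n \<ge> 2"
    and "valid_design n b \<sigma>"
    and "NL_model n \<N> v lam vN"
    and "assumption1 \<N> lam"
    and "assumption2 n b \<sigma> \<N> v lam"
    and "S \<in> exp_assortments n b \<sigma>"
  shows "(\<forall>i\<in>S. nest_of \<N> i \<subseteq> S \<longrightarrow> BF n \<N> v lam vN i S = BF0 n \<N> v lam vN S)
   \<and> (\<forall>i\<in>S. \<not> nest_of \<N> i \<subseteq> S \<longrightarrow>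
         BF n \<N> v lam vN i S > BF0 n \<N> v lam vN S
       \<and> (\<forall>j\<in>S - {i}. nest_of \<N> i = nest_of \<N> j
             \<longleftrightarrow> BF n \<N> v lam vN i S = BF n \<N> v lam vN j S))
   \<and> (\<forall>i\<in>S. BF n \<N> v lam vN i S = BF0 n \<N> v lam vN S \<longrightarrow>
         (\<forall>k\<in>items n - S. nest_of \<N> i \<noteq> nest_of \<N> k))
   \<and> (\<forall>i\<in>S. \<forall>j\<in>S. BF n \<N> v lam vN i S = BF n \<N> v lam vN j S
         \<and> BF n \<N> v lam vN j S > BF0 n \<N> v lam vN S \<longrightarrow> nest_of \<N> i = nest_of \<N> j)
   \<and> (\<forall>i\<in>S. \<forall>j\<in>S. BF n \<N> v lam vN i S \<noteq> BF n \<N> v lam vN j S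
         \<longrightarrow> nest_of \<N> i \<noteq> nest_of \<N> j)"
proof -
  have M: "NL_model n \<N> v lam vN" by fact
  have P: "is_partition n \<N>" using M unfolding NL_model_def by simp
  obtain l d where Sdef: "S = S_minus n \<sigma> l d" using assms(6) unfolding exp_assortments_def by blast
  have Ssub: "S \<subseteq> items n" unfolding Sdef S_minus_def by auto
  have A2: "\<And>N N'. N \<in> \<N> \<Longrightarrow> N' \<in> \<N> \<Longrightarrow> N \<noteq> N' \<Longrightarrow> N \<inter> S \<noteq> {} \<Longrightarrow> N \<inter> S \<noteq> N
      \<Longrightarrow> N' \<inter> S \<noteq> {} \<Longrightarrow> N' \<inter> S \<noteq> N' \<Longrightarrow> Mult v lam N S \<noteq> Mult v lam N' S"
    using assms(5,6) unfolding assumption2_def by blast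
  have B0: "BF0 n \<N> v lam vN S > 0" unfolding BF0_def phi0_def
    using denom_pos[OF M] by simp
  have BFi: "\<And>i. i \<in> S \<Longrightarrow> BF n \<N> v lam vN i S = Mult v lam (nest_of \<N> i) S * BF0 n \<N> v lam vN S"
    using BF_eq[OF M Ssub] by blast
  have NP: "\<And>i. i \<in> S \<Longrightarrow> nest_of \<N> i \<in> \<N> \<and> i \<in> nest_of \<N> i"
    using nest_of_props[OF P] Ssub by blast
  have Mult1: "\<And>i. i \<in> S \<Longrightarrow> nest_of \<N> i \<subseteq> S \<Longrightarrow> Mult v lam (nest_of \<N> i) S = 1"
  proof -
    fix i assume iS: "i \<in> S" and sub: "nest_of \<N> i \<subseteq> S"
    define N where "N = nest_of \<N> i"
    have NN: "N \<in> \<N>" "i \<in> N" using NP[OF iS] N_def by auto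
    have Nsub: "N \<subseteq> items n" using P NN unfolding is_partition_def by auto
    have fin: "finite N" using Nsub unfolding items_def by (auto intro: finite_subset)
    have vpos: "\<And>j. j \<in> N \<Longrightarrow> v j > 0" using M Nsub unfolding NL_model_def by auto
    have Vpos: "(\<Sum>j\<in>N. v j) > 0" using fin NN vpos by (intro sum_pos) auto
    have "N \<inter> S = N" using sub N_def by auto
    then show "Mult v lam (nest_of \<N> i) S = 1" unfolding Mult_def N_def[symmetric] using Vpos by simp
  qed
  have Mult2: "\<And>i. i \<in> S \<Longrightarrow> \<not> nest_of \<N> i \<subseteq> S \<Longrightarrow> Mult v lam (nest_of \<N> i) S > 1"
  proof -
    fix i assume iS: "i \<in> S" and sub: "\<not> nest_of \<N> i \<subseteq> S"
    define N where "N = nest_of \<N> i"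
    have NN: "N \<in> \<N>" "i \<in> N" using NP[OF iS] N_def by auto
    have Nsub: "N \<subseteq> items n" using P NN unfolding is_partition_def by auto
    have fin: "finite N" using Nsub unfolding items_def by (auto intro: finite_subset)
    have vpos: "\<And>j. j \<in> N \<Longrightarrow> v j > 0" using M Nsub unfolding NL_model_def by auto
    obtain k where k: "k \<in> N" "k \<notin> S" using sub N_def by auto
    have "k \<noteq> i" using k iS by auto
    hence "card N \<noteq> 1" using k NN by (auto simp: card_Suc_eq)
    hence lam: "lam N < 1" using assms(4) NN M unfolding assumption1_def NL_model_def by force
    have Apos: "(\<Sum>j\<in>N \<inter> S. v j) > 0" using fin NN iS vpos by (intro sum_pos) auto
    have "(\<Sum>j\<in>N. v j) = (\<Sum>j\<in>N \<inter> S. v j) + (\<Sum>j\<in>N - S. v j)"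
      using fin by (metis Diff_Int2 inf.idem sum.Int_Diff)
    moreover have "(\<Sum>j\<in>N - S. v j) > 0" using fin k vpos by (intro sum_pos) auto
    ultimately have "(\<Sum>j\<in>N. v j) / (\<Sum>j\<in>N \<inter> S. v j) > 1" using Apos by simp
    then show "Mult v lam (nest_of \<N> i) S > 1" unfolding Mult_def N_def[symmetric]
      using lam powr_less_mono[of 0 "1 - lam N"] by simp
  qed
  have I: "\<forall>i\<in>S. nest_of \<N> i \<subseteq> S \<longrightarrow> BF n \<N> v lam vN i S = BF0 n \<N> v lam vN S"
    using BFi Mult1 by simp
  have II: "\<forall>i\<in>S. \<not> nest_of \<N> i \<subseteq> S \<longrightarrow>
         BF n \<N> v lam vN i S > BF0 n \<N> v lam vN S
       \<and> (\<forall>j\<in>S - {i}. nest_of \<N> i = nest_of \<N> j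
             \<longleftrightarrow> BF n \<N> v lam vN i S = BF n \<N> v lam vN j S)"
  proof (intro ballI impI conjI)
    fix i assume iS: "i \<in> S" and ns: "\<not> nest_of \<N> i \<subseteq> S"
    show "BF n \<N> v lam vN i S > BF0 n \<N> v lam vN S"
      using BFi[OF iS] Mult2[OF iS ns] B0 by simp
    fix j assume jS: "j \<in> S - {i}"
    show "nest_of \<N> i = nest_of \<N> j \<longleftrightarrow> BF n \<N> v lam vN i S = BF n \<N> v lam vN j S"
    proof
      assume "nest_of \<N> i = nest_of \<N> j" thus "BF n \<N> v lam vN i S = BF n \<N> v lam vN j S"
        using BFi iS jS by simp
    next
      assume eq: "BF n \<N> v lam vN i S = BF n \<N> v lam vN j S"
      hence meq: "Mult v lam (nest_of \<N> i) S = Mult v lam (nest_of \<N> j) S"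
        using BFi iS jS B0 by simp
      show "nest_of \<N> i = nest_of \<N> j"
      proof (rule ccontr)
        assume ne: "nest_of \<N> i \<noteq> nest_of \<N> j"
        have nj: "\<not> nest_of \<N> j \<subseteq> S" using Mult1 Mult2[OF iS ns] meq jS by force
        have "Mult v lam (nest_of \<N> i) S \<noteq> Mult v lam (nest_of \<N> j) S"
          apply (rule A2)
          using NP iS jS ne ns nj by auto
        with meq show False by simp
      qed
    qed
  qed
  have a: "\<forall>i\<in>S. BF n \<N> v lam vN i S = BF0 n \<N> v lam vN S \<longrightarrow>
         (\<forall>k\<in>items n - S. nest_of \<N> i \<noteq> nest_of \<N> k)"
  proof (intro ballI impI)
    fix i k assume iS: "i \<in> S" and eq: "BF n \<N> v lam vN i S = BF0 n \<N> v lam vN S"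
      and k: "k \<in> items n - S"
    have "nest_of \<N> i \<subseteq> S" using II iS eq by force
    moreover have "k \<in> nest_of \<N> k" using nest_of_props[OF P] k by auto
    ultimately show "nest_of \<N> i \<noteq> nest_of \<N> k" using k by auto
  qed
  have b: "\<forall>i\<in>S. \<forall>j\<in>S. BF n \<N> v lam vN i S = BF n \<N> v lam vN j S
         \<and> BF n \<N> v lam vN j S > BF0 n \<N> v lam vN S \<longrightarrow> nest_of \<N> i = nest_of \<N> j"
  proof (intro ballI impI)
    fix i j assume iS: "i \<in> S" and jS: "j \<in> S" and h: "BF n \<N> v lam vN i S = BF n \<N> v lam vN j S
         \<and> BF n \<N> v lam vN j S > BF0 n \<N> v lam vN S"
    show "nest_of \<N> i = nest_of \<N> j"
    proof (cases "i = j")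
      case False
      have "\<not> nest_of \<N> j \<subseteq> S" using I jS h by force
      moreover have "i \<in> S - {j}" using iS False by simp
      ultimately have "nest_of \<N> j = nest_of \<N> i \<longleftrightarrow> BF n \<N> v lam vN j S = BF n \<N> v lam vN i S"
        using II jS by blast
      then show ?thesis using h by simp
    qed simp
  qed
  have c: "\<forall>i\<in>S. \<forall>j\<in>S. BF n \<N> v lam vN i S \<noteq> BF n \<N> v lam vN j S
         \<longrightarrow> nest_of \<N> i \<noteq> nest_of \<N> j"
    using BFi by auto
  show ?thesis using I II a b c by blast
qed

end
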